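(* For any choice of $\hat R>0$, the truncated perturbed adversary $\mathcal{A}'_\sigma$ is $R$-bounded with $R=1+\sqrt d\hat R$, and is $(r,\frac1T)$-centrally bounded for every $r\ge\sigma\sqrt{2\ln T}$.
   Context: Single parameter setting with Greedy (least squares estimate $\hat\beta^t$ at round $t$). Given an adaptive adversary that at each round picks $\mu_1^t,\dots,\mu_k^t$ with $\|\mu_i^t\|\le1$ as a function of the history, the adversary $\mathcal{A}'_\sigma$ outputs contexts $x_i^t=\mu_i^t+e_i^t$ where $e_i^t=(Q^t)^{-1}z_i^t$, $Q^t$ is an orthonormal matrix with $Q^t\hat\beta^t=(\|\hat\beta^t\|,0,\dots,0)$, and the coordinates of each $z_i^t\in\mathbb{R}^d$ are drawn independently from $\mathcal{N}(0,\sigma^2)$ conditioned on lying in $[-\hat R,\hat R]$. $R$-bounded: with probability 1, $\|x_i^t\|\le R$ for all $i,t$. $(r,\delta')$-centrally bounded: for each history, arm $i$ and fixed unit vector $w$, $w\cdot e_i^t\le r$ with probability at least $1-\delta'$. *)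

theory Defs
  imports "HOL-Probability.Probability"
begin

definition trunc_normal :: "real \<Rightarrow> real \<Rightarrow> real measure" where
  "trunc_normal \<sigma> Rh =
     uniform_measure (density lborel (\<lambda>x. ennreal (normal_density 0 \<sigma> x))) {-Rh..Rh}"

definition trunc_noise :: "real \<Rightarrow> real \<Rightarrow> (real^'n::finite) measure" where
  "trunc_noise \<sigma> Rh =
     distr (PiM UNIV (\<lambda>_::'n. trunc_normal \<sigma> Rh)) borel (\<lambda>f. vec_lambda f)"

end

theory Submission
  imports Defs
begin


lemma normal_exp_shift:
  fixes \<sigma> t x :: real assumes "\<sigma> > 0"
  shows "normal_density 0 \<sigma> x * exp (t * x) = exp (t^2 * \<sigma>^2 / 2) * normal_density (t * \<sigma>^2) \<sigma> x"
proof -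
  have "-(x - 0)\<^sup>2 / (2 * \<sigma>\<^sup>2) + t * x = t^2 * \<sigma>^2 / 2 + (-(x - t*\<sigma>^2)\<^sup>2 / (2 * \<sigma>\<^sup>2))"
    using assms by (simp add: field_simps power2_eq_square)
  then have "exp (-(x - 0)\<^sup>2 / (2 * \<sigma>\<^sup>2)) * exp (t * x) = exp (t^2 * \<sigma>^2 / 2) * exp (-(x - t*\<sigma>^2)\<^sup>2 / (2 * \<sigma>\<^sup>2))"
    by (metis exp_add)
  then show ?thesis unfolding normal_density_def by (metis (no_types, lifting) mult.assoc mult.left_commute)
qed

lemma normal_mgf:
  fixes \<sigma> t :: real assumes "\<sigma> > 0"
  shows "integrable lborel (\<lambda>x. normal_density 0 \<sigma> x * exp (t * x))"
    and "(\<integral>x. normal_density 0 \<sigma> x * exp (t * x) \<partial>lborel) = exp (t^2 * \<sigma>^2 / 2)"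
  unfolding normal_exp_shift[OF assms] using assms by auto

lemma normal_cosh:
  fixes \<sigma> t :: real assumes "\<sigma> > 0"
  shows "integrable lborel (\<lambda>x. normal_density 0 \<sigma> x * cosh (t * x))"
    and "(\<integral>x. normal_density 0 \<sigma> x * cosh (t * x) \<partial>lborel) = exp (t^2 * \<sigma>^2 / 2)"
proof -
  have eq: "normal_density 0 \<sigma> x * cosh (t * x) = (normal_density 0 \<sigma> x * exp (t * x) + normal_density 0 \<sigma> x * exp ((-t) * x)) / 2" for x
    by (simp add: cosh_field_def field_simps)
  show "integrable lborel (\<lambda>x. normal_density 0 \<sigma> x * cosh (t * x))"
    unfolding eq by (intro integrable_divide Bochner_Integration.integrable_add normal_mgf(1)[OF assms])
  show "(\<integral>x. normal_density 0 \<sigma> x * cosh (t * x) \<partial>lborel) = exp (t^2 * \<sigma>^2 / 2)"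
    unfolding eq using normal_mgf[OF assms, of t] normal_mgf[OF assms, of "-t"] by simp
qed

lemma normal_density_even: "normal_density 0 \<sigma> (-x) = normal_density 0 \<sigma> x"
  by (simp add: normal_density_def)

lemma indicator_sym: "indicator {-a..a} (-x) = (indicator {-(a::real)..a} x :: real)"
  by (auto simp: indicator_def)

lemma reflect_exp:
  "(\<integral>x. normal_density 0 \<sigma> x * exp (t * x) * indicator {-a..a} x \<partial>lborel)
   = (\<integral>x. normal_density 0 \<sigma> x * exp (-t * x) * indicator {-a..a} x \<partial>lborel)"
  by (subst lborel_integral_real_affine[where c="-1" and t=0])
     (simp_all add: normal_density_even indicator_sym)

lemma exp_to_cosh:
  fixes \<sigma> :: real assumes "\<sigma> > 0"
  shows "(\<integral>x. normal_density 0 \<sigma> x * exp (t * x) * indicator {-a..a} x \<partial>lborel)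
   = (\<integral>x. normal_density 0 \<sigma> x * cosh (t * x) * indicator {-a..a} x \<partial>lborel)"
proof -
  let ?f = "\<lambda>t x. normal_density 0 \<sigma> x * exp (t * x) * indicator {-a..a} x"
  have i: "integrable lborel (?f s)" for s
    using integrable_real_mult_indicator[OF _ normal_mgf(1)[OF assms, of s], of "{-a..a}"] by simp
  have eq: "normal_density 0 \<sigma> x * cosh (t * x) * indicator {-a..a} x = (?f t x + ?f (-t) x) / 2" for x
    by (simp add: cosh_field_def field_simps)
  have "(\<integral>x. (?f t x + ?f (-t) x) / 2 \<partial>lborel) = (\<integral>x. (?f t x + ?f (-t) x) \<partial>lborel) / 2"
    by simp
  also have "\<dots> = ((\<integral>x. ?f t x \<partial>lborel) + (\<integral>x. ?f (-t) x \<partial>lborel)) / 2"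
    by (subst Bochner_Integration.integral_add[OF i i]) rule
  finally have "(\<integral>x. (?f t x + ?f (-t) x) / 2 \<partial>lborel) = ((\<integral>x. ?f t x \<partial>lborel) + (\<integral>x. ?f (-t) x \<partial>lborel)) / 2" .
  then show ?thesis unfolding eq using reflect_exp[of \<sigma> t a] by simp
qed

lemma cosh_in_out:
  fixes a t x P :: real assumes "a \<ge> 0" and that: "0 \<le> P" "P \<le> 1"
  shows "(cosh (t * x) - cosh (t * a)) * (indicator {-a..a} x - P) \<le> 0"
proof (cases "x \<in> {-a..a}")
  case True
  then have "\<bar>t * x\<bar> \<le> \<bar>t * a\<bar>" using assms by (auto simp: abs_mult intro: mult_left_mono)
  then have "cosh (t * x) \<le> cosh (t * a)"
    by (metis abs_ge_zero cosh_real_abs cosh_real_nonneg_le_iff)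
  with True that show ?thesis by (simp add: mult_nonpos_nonneg)
next
  case False
  then have "\<bar>t * x\<bar> \<ge> \<bar>t * a\<bar>" using assms by (auto simp: abs_mult intro: mult_left_mono)
  then have "cosh (t * x) \<ge> cosh (t * a)"
    by (metis abs_ge_zero cosh_real_abs cosh_real_nonneg_le_iff)
  with False that show ?thesis by (simp add: mult_nonneg_nonpos)
qed

lemma P_bounds:
  fixes \<sigma> a :: real assumes "\<sigma> > 0"
  shows "0 \<le> (\<integral>x. normal_density 0 \<sigma> x * indicator {-a..a} x \<partial>lborel)"
    and "(\<integral>x. normal_density 0 \<sigma> x * indicator {-a..a} x \<partial>lborel) \<le> 1"
proof -
  have i: "integrable lborel (\<lambda>x. normal_density 0 \<sigma> x * indicator {-a..a} x)"
    by (intro integrable_real_mult_indicator) (use assms in auto)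
  show "0 \<le> (\<integral>x. normal_density 0 \<sigma> x * indicator {-a..a} x \<partial>lborel)"
    by (intro integral_nonneg_AE) auto
  have "(\<integral>x. normal_density 0 \<sigma> x * indicator {-a..a} x \<partial>lborel) \<le> (\<integral>x. normal_density 0 \<sigma> x \<partial>lborel)"
    by (intro integral_mono i) (use assms in \<open>auto simp: indicator_def\<close>)
  then show "(\<integral>x. normal_density 0 \<sigma> x * indicator {-a..a} x \<partial>lborel) \<le> 1" using assms by simp
qed

lemma trunc_cosh_le:
  fixes \<sigma> a t :: real assumes s: "\<sigma> > 0" and a: "a \<ge> 0"
  shows "(\<integral>x. normal_density 0 \<sigma> x * cosh (t * x) * indicator {-a..a} x \<partial>lborel)
     \<le> (\<integral>x. normal_density 0 \<sigma> x * indicator {-a..a} x \<partial>lborel) * exp (t^2 * \<sigma>^2 / 2)"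
proof -
  define P where "P = (\<integral>x. normal_density 0 \<sigma> x * indicator {-a..a} x \<partial>lborel)"
  define c where "c = cosh (t * a)"
  let ?\<phi> = "normal_density 0 \<sigma>"
  let ?A = "indicator {-a..a} :: real \<Rightarrow> real"
  have iP: "integrable lborel (\<lambda>x. ?\<phi> x * ?A x)"
    by (intro integrable_real_mult_indicator) (use s in auto)
  have iC: "integrable lborel (\<lambda>x. ?\<phi> x * cosh (t * x))" by (rule normal_cosh(1)[OF s])
  have iCA: "integrable lborel (\<lambda>x. ?\<phi> x * cosh (t * x) * ?A x)"
    by (intro integrable_real_mult_indicator iC) auto
  have i1: "integrable lborel ?\<phi>" using s by auto
  have P01: "0 \<le> P" "P \<le> 1" unfolding P_def using P_bounds[OF s] by auto
  define F where "F x = ?\<phi> x * cosh (t * x) * ?A x - P * (?\<phi> x * cosh (t * x)) - c * (?\<phi> x * ?A x) + (c * P) * ?\<phi> x" for x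
  have Fle: "F x \<le> 0" for x
  proof -
    have "F x = ?\<phi> x * ((cosh (t * x) - c) * (?A x - P))"
      unfolding F_def by (simp add: algebra_simps)
    also have "\<dots> \<le> 0" unfolding c_def
      by (intro mult_nonneg_nonpos normal_density_nonneg cosh_in_out[OF a] P01)
    finally show ?thesis .
  qed
  have iF: "integrable lborel F" unfolding F_def
    by (intro Bochner_Integration.integrable_add Bochner_Integration.integrable_diff integrable_mult_right iCA iC iP i1)
  have "(\<integral>x. F x \<partial>lborel) = (\<integral>x. ?\<phi> x * cosh (t * x) * ?A x \<partial>lborel) - P * exp (t^2 * \<sigma>^2 / 2) - c * P + c * P"
    unfolding F_def
    apply (subst Bochner_Integration.integral_add)
      apply (intro Bochner_Integration.integrable_diff integrable_mult_right iCA iC iP i1)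
     apply (intro integrable_mult_right i1)
    apply (subst Bochner_Integration.integral_diff)
      apply (intro Bochner_Integration.integrable_diff integrable_mult_right iCA iC iP i1)
     apply (intro integrable_mult_right iP)
    apply (subst Bochner_Integration.integral_diff)
      apply (intro integrable_mult_right iCA iC)
     apply (intro integrable_mult_right iC)
    using s by (simp add: normal_cosh(2)[OF s] P_def)
  moreover have "(\<integral>x. F x \<partial>lborel) \<le> 0"
    using integral_nonneg_AE[of "\<lambda>x. - F x" lborel] Fle by simp
  ultimately show ?thesis unfolding P_def by simp
qed

lemma P_pos:
  fixes \<sigma> a :: real assumes s: "\<sigma> > 0" and a: "a > 0"
  shows "0 < (\<integral>x. normal_density 0 \<sigma> x * indicator {-a..a} x \<partial>lborel)"
proof -
  have i: "integrable lborel (\<lambda>x. normal_density 0 \<sigma> x * indicator {-a..a} x)"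
    by (intro integrable_real_mult_indicator) (use s in auto)
  have le: "normal_density 0 \<sigma> a \<le> normal_density 0 \<sigma> x" if "x \<in> {-a..a}" for x
  proof -
    have "x^2 \<le> a^2" using that by (auto intro!: power2_le_iff_abs_le[THEN iffD2] simp: abs_le_iff)
    then have "-(a - 0)\<^sup>2 / (2 * \<sigma>\<^sup>2) \<le> -(x - 0)\<^sup>2 / (2 * \<sigma>\<^sup>2)"
      using s by (simp add: divide_right_mono)
    then have "exp (-(a - 0)\<^sup>2 / (2 * \<sigma>\<^sup>2)) \<le> exp (-(x - 0)\<^sup>2 / (2 * \<sigma>\<^sup>2))" by simp
    then show ?thesis unfolding normal_density_def using s
      by (intro mult_left_mono) auto
  qed
  have "(\<integral>x. normal_density 0 \<sigma> a * indicator {-a..a} x \<partial>lborel) \<le> (\<integral>x. normal_density 0 \<sigma> x * indicator {-a..a} x \<partial>lborel)"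
    by (intro integral_mono i integrable_mult_right integrable_real_indicator) (auto simp: indicator_def le emeasure_lborel_Icc_eq)
  moreover have "(\<integral>x. normal_density 0 \<sigma> a * indicator {-a..a} x \<partial>lborel) = normal_density 0 \<sigma> a * (2 * a)"
    using a by simp
  moreover have "0 < normal_density 0 \<sigma> a * (2 * a)" using a s by (simp add: normal_density_pos)
  ultimately show ?thesis by linarith
qed

lemma emeasure_N:
  fixes \<sigma> a :: real assumes s: "\<sigma> > 0"
  shows "emeasure (density lborel (\<lambda>x. ennreal (normal_density 0 \<sigma> x))) {-a..a}
     = ennreal (\<integral>x. normal_density 0 \<sigma> x * indicator {-a..a} x \<partial>lborel)"
proof -
  have i: "integrable lborel (\<lambda>x. normal_density 0 \<sigma> x * indicator {-a..a} x)"
    by (intro integrable_real_mult_indicator) (use s in auto)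
  have "emeasure (density lborel (\<lambda>x. ennreal (normal_density 0 \<sigma> x))) {-a..a}
      = (\<integral>\<^sup>+x. ennreal (normal_density 0 \<sigma> x * indicator {-a..a} x) \<partial>lborel)"
    by (subst emeasure_density) (auto intro!: nn_integral_cong simp: indicator_def)
  also have "\<dots> = ennreal (\<integral>x. normal_density 0 \<sigma> x * indicator {-a..a} x \<partial>lborel)"
    by (rule nn_integral_eq_integral[OF i]) auto
  finally show ?thesis .
qed

lemma trunc_normal_prob:
  fixes \<sigma> a :: real assumes s: "\<sigma> > 0" and a: "a > 0"
  shows "prob_space (trunc_normal \<sigma> a)"
  unfolding trunc_normal_def
  by (rule prob_space_uniform_measure) (use P_pos[OF s a] in \<open>simp_all add: emeasure_N[OF s]\<close>)

lemma trunc_mgf: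
  fixes \<sigma> a t :: real assumes s: "\<sigma> > 0" and a: "a > 0"
  shows "(\<integral>\<^sup>+x. ennreal (exp (t * x)) \<partial>trunc_normal \<sigma> a) \<le> ennreal (exp (t^2 * \<sigma>^2 / 2))"
proof -
  define P where "P = (\<integral>x. normal_density 0 \<sigma> x * indicator {-a..a} x \<partial>lborel)"
  define I where "I = (\<integral>x. normal_density 0 \<sigma> x * exp (t * x) * indicator {-a..a} x \<partial>lborel)"
  have P0: "0 < P" unfolding P_def by (rule P_pos[OF s a])
  have IP: "I \<le> P * exp (t^2 * \<sigma>^2 / 2)"
    unfolding I_def P_def exp_to_cosh[OF s] using trunc_cosh_le[OF s] a by simp
  have iI: "integrable lborel (\<lambda>x. normal_density 0 \<sigma> x * exp (t * x) * indicator {-a..a} x)"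
    using integrable_real_mult_indicator[OF _ normal_mgf(1)[OF s, of t], of "{-a..a}"] by simp
  have I0: "0 \<le> I" unfolding I_def by (intro integral_nonneg_AE) auto
  have "(\<integral>\<^sup>+x. ennreal (exp (t * x)) \<partial>trunc_normal \<sigma> a)
     = (\<integral>\<^sup>+x. ennreal (exp (t * x)) * indicator {-a..a} x \<partial>density lborel (\<lambda>x. ennreal (normal_density 0 \<sigma> x)))
        / emeasure (density lborel (\<lambda>x. ennreal (normal_density 0 \<sigma> x))) {-a..a}"
    unfolding trunc_normal_def by (rule nn_integral_uniform_measure) auto
  also have "(\<integral>\<^sup>+x. ennreal (exp (t * x)) * indicator {-a..a} x \<partial>density lborel (\<lambda>x. ennreal (normal_density 0 \<sigma> x)))
     = (\<integral>\<^sup>+x. ennreal (normal_density 0 \<sigma> x * exp (t * x) * indicator {-a..a} x) \<partial>lborel)"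
    by (subst nn_integral_density) (auto intro!: nn_integral_cong simp: indicator_def ennreal_mult)
  also have "\<dots> = ennreal I" unfolding I_def
    by (rule nn_integral_eq_integral[OF iI]) auto
  also have "emeasure (density lborel (\<lambda>x. ennreal (normal_density 0 \<sigma> x))) {-a..a} = ennreal P"
    unfolding P_def by (rule emeasure_N[OF s])
  also have "ennreal I / ennreal P = ennreal (I / P)" using P0 I0 by (simp add: divide_ennreal)
  also have "\<dots> \<le> ennreal (exp (t^2 * \<sigma>^2 / 2))"
    using IP P0 by (intro ennreal_leI) (simp add: pos_divide_le_eq mult.commute)
  finally show ?thesis .
qed

lemma measurable_vec_lambda:
  assumes "sets M = sets (borel :: real measure)"
  shows "(\<lambda>f. vec_lambda f :: real^'n::finite) \<in> borel_measurable (PiM UNIV (\<lambda>_. M))"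
proof (subst borel_measurable_euclidean_space, intro ballI)
  fix b :: "real^'n" assume "b \<in> Basis"
  then obtain j u where b: "b = axis j u" "u \<in> (Basis :: real set)" unfolding Basis_vec_def by auto
  have "(\<lambda>f. f j) \<in> measurable (PiM UNIV (\<lambda>_. M)) M" by (rule measurable_component_singleton) auto
  then have m: "(\<lambda>f. f j) \<in> borel_measurable (PiM UNIV (\<lambda>_. M))"
    using measurable_cong_sets[OF refl assms] by blast
  show "(\<lambda>f. vec_lambda f \<bullet> b) \<in> borel_measurable (PiM UNIV (\<lambda>_. M))"
    unfolding b inner_axis using m by simp
qed

lemma sets_trunc_normal: "sets (trunc_normal \<sigma> a) = sets borel"
  unfolding trunc_normal_def by simp

lemma noise_mgf:
  fixes \<sigma> a l :: real and v :: "real^'n::finite" assumes s: "\<sigma> > 0" and a: "a > 0"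
  shows "(\<integral>\<^sup>+z. ennreal (exp (l * (v \<bullet> z))) \<partial>(trunc_noise \<sigma> a :: (real^'n) measure))
     \<le> ennreal (exp (l^2 * \<sigma>^2 * (norm v)^2 / 2))"
proof -
  let ?M = "\<lambda>_::'n. trunc_normal \<sigma> a"
  interpret P: product_prob_space ?M
    by (simp add: product_prob_space_def product_prob_space_axioms_def product_sigma_finite_def
        trunc_normal_prob[OF s a] prob_space_imp_sigma_finite)
  have mv: "(\<lambda>f. vec_lambda f :: real^'n) \<in> measurable (PiM UNIV ?M) borel"
    by (rule measurable_vec_lambda[OF sets_trunc_normal])
  have "(\<integral>\<^sup>+z. ennreal (exp (l * (v \<bullet> z))) \<partial>(trunc_noise \<sigma> a :: (real^'n) measure))
      = (\<integral>\<^sup>+f. ennreal (exp (l * (v \<bullet> vec_lambda f))) \<partial>PiM UNIV ?M)"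
    unfolding trunc_noise_def by (subst nn_integral_distr[OF mv]) auto
  also have "\<dots> = (\<integral>\<^sup>+f. (\<Prod>j\<in>UNIV. ennreal (exp (l * v$j * f j))) \<partial>PiM UNIV ?M)"
  proof (intro nn_integral_cong)
    fix f :: "'n \<Rightarrow> real"
    have "l * (v \<bullet> vec_lambda f) = (\<Sum>j\<in>UNIV. l * v$j * f j)"
      unfolding inner_vec_def by (simp add: sum_distrib_left mult.assoc)
    then show "ennreal (exp (l * (v \<bullet> vec_lambda f))) = (\<Prod>j\<in>UNIV. ennreal (exp (l * v$j * f j)))"
      by (simp add: exp_sum prod_ennreal)
  qed
  also have "\<dots> = (\<Prod>j\<in>UNIV. (\<integral>\<^sup>+x. ennreal (exp (l * v$j * x)) \<partial>trunc_normal \<sigma> a))"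
    by (rule P.product_nn_integral_prod[where f="\<lambda>j x. ennreal (exp (l * v$j * x))"])
       (auto simp: measurable_cong_sets[OF sets_trunc_normal refl])
  also have "\<dots> \<le> (\<Prod>j\<in>UNIV. ennreal (exp ((l * v$j)^2 * \<sigma>^2 / 2)))"
    by (intro prod_mono_ennreal trunc_mgf[OF s a])
  also have "\<dots> = ennreal (exp (\<Sum>j\<in>UNIV. (l * v$j)^2 * \<sigma>^2 / 2))"
    by (simp add: exp_sum prod_ennreal)
  also have "(\<Sum>j\<in>UNIV. (l * v$j)^2 * \<sigma>^2 / 2) = l^2 * \<sigma>^2 * (v \<bullet> v) / 2"
    unfolding inner_vec_def by (simp add: sum_distrib_left sum_divide_distrib power_mult_distrib power2_eq_square mult_ac)
  also have "v \<bullet> v = (norm v)^2" by (simp add: dot_square_norm)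
  finally show ?thesis .
qed

lemma matrix_inv_orth:
  fixes Q :: "real^'n^'n" assumes "orthogonal_matrix Q"
  shows "matrix_inv Q = transpose Q"
proof -
  have o: "transpose Q ** Q = mat 1" "Q ** transpose Q = mat 1" using assms by (auto simp: orthogonal_matrix_def)
  define X where "X = matrix_inv Q"
  have "Q ** X = mat 1 \<and> X ** Q = mat 1"
    unfolding X_def matrix_inv_def by (rule someI[of _ "transpose Q"]) (use o in auto)
  then have "X = X ** (Q ** transpose Q)" "X ** Q = mat 1" using o by (auto simp: matrix_mul_rid)
  then have "X = transpose Q" by (metis matrix_mul_assoc matrix_mul_lid)
  then show ?thesis by (simp add: X_def)
qed

lemma norm_orth:
  fixes Q :: "real^'n^'n" assumes "orthogonal_matrix Q"
  shows "norm (Q *v x) = norm x"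
proof -
  have "orthogonal_transformation (\<lambda>x. Q *v x)"
    using assms by (simp add: orthogonal_transformation_matrix matrix_vector_mul_linear)
  then show ?thesis by (simp add: orthogonal_transformation_norm)
qed

lemma norm_box_bound:
  fixes z :: "real^'n::finite" assumes "\<forall>j. z$j \<in> {-a..a}"
  shows "norm z \<le> sqrt (real CARD('n)) * a"
proof -
  have a0: "0 \<le> a" using assms by fastforce
  have "(norm z)^2 = (\<Sum>j\<in>UNIV. (z$j)^2)" unfolding power2_norm_eq_inner inner_vec_def by (simp add: power2_eq_square)
  also have "\<dots> \<le> (\<Sum>j\<in>(UNIV::'n set). a^2)"
  proof (intro sum_mono)
    fix j have "\<bar>z$j\<bar> \<le> a" using spec[OF assms, of j] by (auto simp: abs_le_iff)
    then show "(z$j)^2 \<le> a^2" using a0 by (simp add: power2_le_iff_abs_le)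
  qed
  also have "\<dots> = (sqrt (real CARD('n)) * a)^2" by (simp add: power_mult_distrib)
  finally have "(norm z)^2 \<le> (sqrt (real CARD('n)) * a)^2" .
  moreover have "0 \<le> sqrt (real CARD('n)) * a" using a0 by simp
  ultimately show ?thesis by (rule power2_le_imp_le)
qed

lemma AE_noise_box:
  fixes \<sigma> a :: real assumes s: "\<sigma> > 0" and a: "a > 0"
  shows "AE z in (trunc_noise \<sigma> a :: (real^'n::finite) measure). norm z \<le> sqrt (real CARD('n)) * a"
proof -
  let ?M = "\<lambda>_::'n. trunc_normal \<sigma> a"
  have mv: "(\<lambda>f. vec_lambda f :: real^'n) \<in> measurable (PiM UNIV ?M) borel"
    by (rule measurable_vec_lambda[OF sets_trunc_normal])
  have c: "continuous_on UNIV (\<lambda>z::real^'n. norm z)" by (intro continuous_intros)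
  have cl: "closed {z::real^'n. norm z \<le> sqrt (real CARD('n)) * a}"
    by (intro closed_Collect_le continuous_intros)
  have coord: "AE x in trunc_normal \<sigma> a. x \<in> {-a..a}"
    unfolding trunc_normal_def by (rule AE_uniform_measureI) auto
  have "AE f in PiM UNIV ?M. \<forall>j\<in>UNIV. f j \<in> {-a..a}"
    by (intro AE_finite_allI AE_PiM_component[where P="\<lambda>x. x \<in> {-a..a}"] coord trunc_normal_prob[OF s a]) auto
  then have "AE f in PiM UNIV ?M. norm (vec_lambda f :: real^'n) \<le> sqrt (real CARD('n)) * a"
    by eventually_elim (intro norm_box_bound, simp)
  then show ?thesis unfolding trunc_noise_def
    by (subst AE_distr_iff[OF mv]) (use cl in \<open>auto intro: borel_closed\<close>)
qed

lemma tail_bound: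
  fixes \<sigma> a l r :: real and v :: "real^'n::finite" assumes s: "\<sigma> > 0" and a: "a > 0" and l: "l \<ge> 0"
    and v: "norm v = 1"
  shows "emeasure (trunc_noise \<sigma> a :: (real^'n) measure) {z \<in> space (trunc_noise \<sigma> a). r < v \<bullet> z}
     \<le> ennreal (exp (- l * r + l^2 * \<sigma>^2 / 2))"
proof -
  let ?S = "trunc_noise \<sigma> a :: (real^'n) measure"
  have sp: "space ?S = UNIV" by (simp add: trunc_noise_def)
  have ss: "sets ?S = sets borel" by (simp add: trunc_noise_def)
  have B: "{z \<in> space ?S. r < v \<bullet> z} \<in> sets ?S"
    unfolding ss sp using open_halfspace_gt[where a=v and b=r] by (intro borel_open) auto
  have "emeasure ?S {z \<in> space ?S. r < v \<bullet> z} = (\<integral>\<^sup>+z. indicator {z \<in> space ?S. r < v \<bullet> z} z \<partial>?S)"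
    using B by simp
  also have "\<dots> \<le> (\<integral>\<^sup>+z. ennreal (exp (- l * r)) * ennreal (exp (l * (v \<bullet> z))) \<partial>?S)"
  proof (intro nn_integral_mono)
    fix z
    show "indicator {z \<in> space ?S. r < v \<bullet> z} z \<le> ennreal (exp (- l * r)) * ennreal (exp (l * (v \<bullet> z)))"
    proof (cases "r < v \<bullet> z")
      case True
      then have "0 \<le> l * (v \<bullet> z) - l * r" using l by (simp add: mult_left_mono)
      then have "1 \<le> exp (- l * r) * exp (l * (v \<bullet> z))" by (simp add: exp_add[symmetric])
      then show ?thesis using True by (simp add: sp ennreal_mult[symmetric])
    qed (simp add: sp)
  qed
  also have "\<dots> = ennreal (exp (- l * r)) * (\<integral>\<^sup>+z. ennreal (exp (l * (v \<bullet> z))) \<partial>?S)"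
  proof (rule nn_integral_cmult)
    have "(\<lambda>x::real^'n. exp (l * (v \<bullet> x))) \<in> borel_measurable borel"
      by (intro borel_measurable_continuous_onI continuous_intros)
    then have "(\<lambda>x::real^'n. exp (l * (v \<bullet> x))) \<in> borel_measurable ?S"
      using measurable_cong_sets[OF ss refl, of borel] by blast
    then show "(\<lambda>x. ennreal (exp (l * (v \<bullet> x)))) \<in> borel_measurable ?S"
      by (rule measurable_compose[OF _ measurable_ennreal])
  qed
  also have "\<dots> \<le> ennreal (exp (- l * r)) * ennreal (exp (l^2 * \<sigma>^2 * (norm v)^2 / 2))"
    by (intro mult_left_mono noise_mgf[OF s a]) auto
  also have "\<dots> = ennreal (exp (- l * r + l^2 * \<sigma>^2 / 2))"
    using v by (simp add: ennreal_mult[symmetric] exp_add[symmetric])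
  finally show ?thesis .
qed

theorem lemma6:
  fixes \<sigma> Rh :: real and T :: nat and i1 :: "'n::finite"
    and \<mu> \<beta> :: "real^'n" and Q :: "real^'n^'n"
  assumes "\<sigma> > 0" and "Rh > 0" and "T \<ge> 1"
    and "norm \<mu> \<le> 1"
    and "orthogonal_matrix Q"
    and "Q *v \<beta> = (\<chi> j. if j = i1 then norm \<beta> else 0)"
  shows "(AE z in trunc_noise \<sigma> Rh.
            norm (\<mu> + matrix_inv Q *v z) \<le> 1 + sqrt (real CARD('n)) * Rh)
       \<and> (\<forall>w::real^'n. \<forall>r::real. norm w = 1 \<longrightarrow> r \<ge> \<sigma> * sqrt (2 * ln (real T)) \<longrightarrow>
            measure (trunc_noise \<sigma> Rh) {z \<in> space (trunc_noise \<sigma> Rh). w \<bullet> (matrix_inv Q *v z) \<le> r}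
              \<ge> 1 - 1 / real T)"
proof
  note s = assms(1) and a = assms(2)
  have Qi: "matrix_inv Q = transpose Q" by (rule matrix_inv_orth[OF assms(5)])
  have oQt: "orthogonal_matrix (transpose Q)" using assms(5) by simp
  show "AE z in trunc_noise \<sigma> Rh. norm (\<mu> + matrix_inv Q *v z) \<le> 1 + sqrt (real CARD('n)) * Rh"
    using AE_noise_box[OF s a]
  proof eventually_elim
    case (elim z)
    have "norm (\<mu> + matrix_inv Q *v z) \<le> norm \<mu> + norm (matrix_inv Q *v z)" by (rule norm_triangle_ineq)
    also have "norm (matrix_inv Q *v z) = norm z" unfolding Qi by (rule norm_orth[OF oQt])
    finally show ?case using elim assms(4) by linarith
  qed
  show "\<forall>w::real^'n. \<forall>r::real. norm w = 1 \<longrightarrow> r \<ge> \<sigma> * sqrt (2 * ln (real T)) \<longrightarrow>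
            measure (trunc_noise \<sigma> Rh) {z \<in> space (trunc_noise \<sigma> Rh). w \<bullet> (matrix_inv Q *v z) \<le> r}
              \<ge> 1 - 1 / real T"
  proof (intro allI impI)
    fix w :: "real^'n" and r :: real
    assume w: "norm w = 1" and r: "r \<ge> \<sigma> * sqrt (2 * ln (real T))"
    let ?S = "trunc_noise \<sigma> Rh :: (real^'n) measure"
    define v where "v = Q *v w"
    have v1: "norm v = 1" unfolding v_def using norm_orth[OF assms(5)] w by simp
    have inner_eq: "w \<bullet> (matrix_inv Q *v z) = v \<bullet> z" for z
      unfolding Qi v_def by (metis dot_lmul_matrix vector_transpose_matrix)
    have lnT: "0 \<le> ln (real T)" using assms(3) by simp
    have r0: "0 \<le> r" using r s lnT by (smt (verit) mult_nonneg_nonneg real_sqrt_ge_zero)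
    have r2: "\<sigma>^2 * (2 * ln (real T)) \<le> r^2"
    proof -
      have "(\<sigma> * sqrt (2 * ln (real T)))^2 \<le> r^2"
        using r s lnT by (intro power_mono) auto
      then show ?thesis using lnT by (simp add: power_mult_distrib)
    qed
    interpret P: product_prob_space "\<lambda>_::'n. trunc_normal \<sigma> Rh"
      by (simp add: product_prob_space_def product_prob_space_axioms_def product_sigma_finite_def
          trunc_normal_prob[OF s a] prob_space_imp_sigma_finite)
    have psS: "prob_space ?S" unfolding trunc_noise_def
      by (intro prob_space.prob_space_distr prob_space_PiM trunc_normal_prob[OF s a]
          measurable_vec_lambda[OF sets_trunc_normal])
    interpret S: prob_space ?S by (rule psS)
    have sp: "space ?S = UNIV" by (simp add: trunc_noise_def)
    have ss: "sets ?S = sets borel" by (simp add: trunc_noise_def)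
    define l where "l = r / \<sigma>^2"
    have l0: "0 \<le> l" unfolding l_def using r0 by simp
    have e1: "emeasure ?S {z \<in> space ?S. r < v \<bullet> z} \<le> ennreal (exp (- l * r + l^2 * \<sigma>^2 / 2))"
      by (rule tail_bound[OF s a l0 v1])
    have e2: "- l * r + l^2 * \<sigma>^2 / 2 = -(r^2) / (2 * \<sigma>^2)"
      unfolding l_def using s by (simp add: field_simps power2_eq_square)
    have e3: "-(r^2) / (2 * \<sigma>^2) \<le> - ln (real T)"
      using r2 s by (simp add: field_simps)
    have e4: "exp (- ln (real T)) = 1 / real T" using assms(3) by (simp add: exp_minus inverse_eq_divide)
    have "exp (- l * r + l^2 * \<sigma>^2 / 2) \<le> 1 / real T"
      unfolding e2 e4[symmetric] using e3 by simp
    then have em: "emeasure ?S {z \<in> space ?S. r < v \<bullet> z} \<le> ennreal (1 / real T)"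
      using e1 by (meson ennreal_leI order_trans)
    have B: "{z \<in> space ?S. r < v \<bullet> z} \<in> S.events"
      unfolding ss sp using open_halfspace_gt[where a=v and b=r] by (intro borel_open) auto
    have mB: "S.prob {z \<in> space ?S. r < v \<bullet> z} \<le> 1 / real T"
      using em S.emeasure_eq_measure[of "{z \<in> space ?S. r < v \<bullet> z}"] by simp
    have "{z \<in> space ?S. w \<bullet> (matrix_inv Q *v z) \<le> r} = space ?S - {z \<in> space ?S. r < v \<bullet> z}"
      unfolding inner_eq by auto
    then have "S.prob {z \<in> space ?S. w \<bullet> (matrix_inv Q *v z) \<le> r} = 1 - S.prob {z \<in> space ?S. r < v \<bullet> z}"
      using S.prob_compl[OF B] by simp
    then show "S.prob {z \<in> space ?S. w \<bullet> (matrix_inv Q *v z) \<le> r} \<ge> 1 - 1 / real T"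
      using mB by simp
  qed
qed

end
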